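(* Let $\{(\Gamma_t,\theta_t)\}_{t\in[0,\underline t)}$ evolve by $\partial_t\gamma=\kappa\nu_\theta+\upsilon_T T$, $\partial_t\theta=\upsilon_\theta$, where for all $t\in[0,\underline t)$ and all $s\in\mathbb{R}/L(\Gamma_t)\mathbb{Z}$ (arclength measured from the point $u=0$) the tangential velocity satisfies $$\upsilon_T(t,s)=\upsilon_{T,0}(t)+\int_0^s\kappa\psi_1\,d\bar s-\frac{s}{L(\Gamma_t)}\int_{\Gamma_t}\kappa\psi_1\,d\bar s,$$ with $\upsilon_{T,0}\in\mathcal C^1([0,\underline t))$ arbitrary. Then for every $u\in S^1$ the quantity $g(t,u)/L(\Gamma_t)$ is constant in $t$.
   Context: $S^1=\mathbb{R}/2\pi\mathbb{Z}$; $\Gamma_t$ is a closed curve parametrized by $\gamma(t,\cdot):S^1\to\mathbb{R}^3$, $g=\|\partial_u\gamma\|$, $ds=g\,du$, $\partial_s=g^{-1}\partial_u$, $L(\Gamma_t)=\int_{\Gamma_t}ds$ its length. $T,N,B$ is the Frenet frame, $\kappa$ the curvature. For an angle function $\theta(t,u)\in S^1$, $\nu_\theta=\cos\theta\,N+\sin\theta\,B$ and $\psi_1=\kappa\cos\theta$ (note $\kappa\nu_\theta=\cos\theta\,\partial_s^2\gamma+\sin\theta\,\partial_s\gamma\times\partial_s^2\gamma$). $\upsilon_\theta$ is a given $\mathcal C^1$ function. *)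

theory Defs
  imports "HOL-Analysis.Analysis"
begin

text \<open>Space-time functions are uncurried maps on I x R, where I is the time interval
  (here [0, tb)) and the second coordinate u is the curve parameter (2 pi-periodic).\<close>

definition Dt :: "real set \<Rightarrow> (real \<times> real \<Rightarrow> 'a::real_normed_vector) \<Rightarrow> real \<times> real \<Rightarrow> 'a" where
  "Dt I F p = vector_derivative (\<lambda>\<tau>. F (\<tau>, snd p)) (at (fst p) within I)"

definition Du :: "(real \<times> real \<Rightarrow> 'a::real_normed_vector) \<Rightarrow> real \<times> real \<Rightarrow> 'a" where
  "Du F p = vector_derivative (\<lambda>v. F (fst p, v)) (at (snd p))"

fun iterD :: "real set \<Rightarrow> bool list \<Rightarrow> (real \<times> real \<Rightarrow> 'a::real_normed_vector) \<Rightarrow> real \<times> real \<Rightarrow> 'a" where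
  "iterD I [] F = F"
| "iterD I (b # bs) F = (if b then Dt I (iterD I bs F) else Du (iterD I bs F))"

definition Ck_on :: "real set \<Rightarrow> nat \<Rightarrow> (real \<times> real \<Rightarrow> 'a::real_normed_vector) \<Rightarrow> bool" where
  "Ck_on I k F \<longleftrightarrow>
     (\<forall>bs. length bs \<le> k \<longrightarrow>
        continuous_on (Sigma I (\<lambda>_. UNIV)) (iterD I bs F) \<and>
        (length bs < k \<longrightarrow> (\<forall>p \<in> Sigma I (\<lambda>_. UNIV).
           ((\<lambda>\<tau>. iterD I bs F (\<tau>, snd p)) has_vector_derivative Dt I (iterD I bs F) p) (at (fst p) within I) \<and>
           ((\<lambda>v. iterD I bs F (fst p, v)) has_vector_derivative Du (iterD I bs F) p) (at (snd p)))))"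

definition smooth_on_st :: "real set \<Rightarrow> (real \<times> real \<Rightarrow> 'a::real_normed_vector) \<Rightarrow> bool" where
  "smooth_on_st I F \<longleftrightarrow> (\<forall>k. Ck_on I k F)"

definition C1_time :: "real set \<Rightarrow> (real \<Rightarrow> real) \<Rightarrow> bool" where
  "C1_time I f \<longleftrightarrow> (\<exists>D. (\<forall>t\<in>I. (f has_real_derivative D t) (at t within I)) \<and> continuous_on I D)"

definition speed :: "(real \<Rightarrow> real \<Rightarrow> real^3) \<Rightarrow> real \<Rightarrow> real \<Rightarrow> real" where
  "speed \<gamma> t u = norm (vector_derivative (\<gamma> t) (at u))"

definition dS :: "(real \<Rightarrow> real \<Rightarrow> real^3) \<Rightarrow> (real \<Rightarrow> real \<Rightarrow> real^3) \<Rightarrow> real \<Rightarrow> real \<Rightarrow> real^3" where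
  "dS \<gamma> f t u = (1 / speed \<gamma> t u) *\<^sub>R vector_derivative (f t) (at u)"

definition tangent :: "(real \<Rightarrow> real \<Rightarrow> real^3) \<Rightarrow> real \<Rightarrow> real \<Rightarrow> real^3" where
  "tangent \<gamma> = dS \<gamma> \<gamma>"

definition curv_vec :: "(real \<Rightarrow> real \<Rightarrow> real^3) \<Rightarrow> real \<Rightarrow> real \<Rightarrow> real^3" where
  "curv_vec \<gamma> = dS \<gamma> (tangent \<gamma>)"

definition curvature :: "(real \<Rightarrow> real \<Rightarrow> real^3) \<Rightarrow> real \<Rightarrow> real \<Rightarrow> real" where
  "curvature \<gamma> t u = norm (curv_vec \<gamma> t u)"

definition curve_length :: "(real \<Rightarrow> real \<Rightarrow> real^3) \<Rightarrow> real \<Rightarrow> real" where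
  "curve_length \<gamma> t = integral {0..2*pi} (speed \<gamma> t)"

definition arclength :: "(real \<Rightarrow> real \<Rightarrow> real^3) \<Rightarrow> real \<Rightarrow> real \<Rightarrow> real" where
  "arclength \<gamma> t u = integral {0..u} (speed \<gamma> t)"

definition psi1 :: "(real \<Rightarrow> real \<Rightarrow> real^3) \<Rightarrow> (real \<Rightarrow> real \<Rightarrow> real) \<Rightarrow> real \<Rightarrow> real \<Rightarrow> real" where
  "psi1 \<gamma> \<theta> t u = curvature \<gamma> t u * cos (\<theta> t u)"

definition kappa_nu :: "(real \<Rightarrow> real \<Rightarrow> real^3) \<Rightarrow> (real \<Rightarrow> real \<Rightarrow> real) \<Rightarrow> real \<Rightarrow> real \<Rightarrow> real^3" where
  "kappa_nu \<gamma> \<theta> t u = cos (\<theta> t u) *\<^sub>R curv_vec \<gamma> t u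
                        + sin (\<theta> t u) *\<^sub>R cross3 (tangent \<gamma> t u) (curv_vec \<gamma> t u)"

text \<open>Tangential velocity, written at the point with parameter u in [0, 2 pi], i.e. at arclength
  s = arclength gamma t u:  vT0 t + int_0^s kappa psi1 ds - s/L int_Gamma kappa psi1 ds.\<close>
definition tangential_velocity ::
  "(real \<Rightarrow> real \<Rightarrow> real^3) \<Rightarrow> (real \<Rightarrow> real \<Rightarrow> real) \<Rightarrow> (real \<Rightarrow> real) \<Rightarrow> real \<Rightarrow> real \<Rightarrow> real" where
  "tangential_velocity \<gamma> \<theta> vT0 t u =
     vT0 t
     + integral {0..u} (\<lambda>v. curvature \<gamma> t v * psi1 \<gamma> \<theta> t v * speed \<gamma> t v)
     - arclength \<gamma> t u / curve_length \<gamma> t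
         * integral {0..2*pi} (\<lambda>v. curvature \<gamma> t v * psi1 \<gamma> \<theta> t v * speed \<gamma> t v)"

end

theory Submission
  imports Defs
begin


lemma Ck_deriv_t:
  assumes "Ck_on I k F" "length bs < k" "t \<in> I"
  shows "((\<lambda>\<tau>. iterD I bs F (\<tau>, u)) has_vector_derivative Dt I (iterD I bs F) (t,u)) (at t within I)"
proof -
  have "\<forall>p \<in> Sigma I (\<lambda>_. UNIV).
           ((\<lambda>\<tau>. iterD I bs F (\<tau>, snd p)) has_vector_derivative Dt I (iterD I bs F) p) (at (fst p) within I) \<and>
           ((\<lambda>v. iterD I bs F (fst p, v)) has_vector_derivative Du (iterD I bs F) p) (at (snd p))"
    using assms(1,2) unfolding Ck_on_def by (meson less_imp_le_nat)
  from bspec[OF this, of "(t,u)"] show ?thesis using assms(3) by simp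
qed

lemma Ck_deriv_u:
  assumes "Ck_on I k F" "length bs < k" "t \<in> I"
  shows "((\<lambda>v. iterD I bs F (t, v)) has_vector_derivative Du (iterD I bs F) (t,u)) (at u)"
proof -
  have "\<forall>p \<in> Sigma I (\<lambda>_. UNIV).
           ((\<lambda>\<tau>. iterD I bs F (\<tau>, snd p)) has_vector_derivative Dt I (iterD I bs F) p) (at (fst p) within I) \<and>
           ((\<lambda>v. iterD I bs F (fst p, v)) has_vector_derivative Du (iterD I bs F) p) (at (snd p))"
    using assms(1,2) unfolding Ck_on_def by (meson less_imp_le_nat)
  from bspec[OF this, of "(t,u)"] show ?thesis using assms(3) by simp
qed

lemma Ck_cont:
  assumes "Ck_on I k F" "length bs \<le> k"
  shows "continuous_on (I \<times> UNIV) (iterD I bs F)"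
  using assms unfolding Ck_on_def by blast

lemma Ck_cont_line:
  assumes "Ck_on I k F" "length bs \<le> k" "t \<in> I"
  shows "continuous_on S (\<lambda>v. iterD I bs F (t, v))"
proof -
  have "continuous_on S ((iterD I bs F) \<circ> (\<lambda>v. (t, v)))"
    by (rule continuous_on_compose[OF _ continuous_on_subset[OF Ck_cont[OF assms(1,2)]]])
       (auto intro!: continuous_intros simp: assms(3))
  then show ?thesis by (simp add: o_def)
qed

lemma Ck_cont_time:
  assumes "Ck_on I k F" "length bs \<le> k" "S \<subseteq> I"
  shows "continuous_on S (\<lambda>\<tau>. iterD I bs F (\<tau>, u))"
proof -
  have "continuous_on S ((iterD I bs F) \<circ> (\<lambda>\<tau>. (\<tau>, u)))"
    by (rule continuous_on_compose[OF _ continuous_on_subset[OF Ck_cont[OF assms(1,2)]]])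
       (use assms(3) in \<open>auto intro!: continuous_intros\<close>)
  then show ?thesis by (simp add: o_def)
qed

lemma schwarz:
  fixes F :: "real \<times> real \<Rightarrow> 'a::euclidean_space"
  assumes C2: "Ck_on {0..<tb} 2 F" and t: "t \<in> {0..<tb}"
  shows "Dt {0..<tb} (Du F) (t,u) = Du (Dt {0..<tb} F) (t,u)"
proof -
  let ?I = "{0..<tb::real}"
  have tb: "0 < tb" using t by auto
  have dt: "\<And>\<sigma> v. \<sigma> \<in> ?I \<Longrightarrow> ((\<lambda>\<tau>. F (\<tau>, v)) has_vector_derivative Dt ?I F (\<sigma>, v)) (at \<sigma> within ?I)"
    using Ck_deriv_t[OF C2, of "[]"] by simp
  have du: "\<And>\<sigma> v. \<sigma> \<in> ?I \<Longrightarrow> ((\<lambda>v. F (\<sigma>, v)) has_vector_derivative Du F (\<sigma>, v)) (at v)"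
    using Ck_deriv_u[OF C2, of "[]"] by simp
  have dudt: "\<And>\<sigma> v. \<sigma> \<in> ?I \<Longrightarrow> ((\<lambda>v. Dt ?I F (\<sigma>, v)) has_vector_derivative Du (Dt ?I F) (\<sigma>, v)) (at v)"
    using Ck_deriv_u[OF C2, of "[True]"] by simp
  have dtdu: "\<And>\<sigma> v. \<sigma> \<in> ?I \<Longrightarrow> ((\<lambda>\<tau>. Du F (\<tau>, v)) has_vector_derivative Dt ?I (Du F) (\<sigma>, v)) (at \<sigma> within ?I)"
    using Ck_deriv_t[OF C2, of "[False]"] by simp
  have c_dt: "continuous_on (?I \<times> UNIV) (Dt ?I F)"
    using Ck_cont[OF C2, of "[True]"] by simp
  have c_dudt: "continuous_on (?I \<times> UNIV) (Du (Dt ?I F))"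
    using Ck_cont[OF C2, of "[False,True]"] by simp
  have key: "Du F (\<tau>, u) - Du F (0, u) = integral {0..\<tau>} (\<lambda>\<sigma>. Du (Dt ?I F) (\<sigma>, u))"
    if \<tau>: "\<tau> \<in> ?I" for \<tau>
  proof -
    have sub: "{0..\<tau>} \<subseteq> ?I" using \<tau> by auto
    have eq: "F (\<tau>, v) - F (0, v) = integral {0..\<tau>} (\<lambda>\<sigma>. Dt ?I F (\<sigma>, v))" for v
    proof -
      have "((\<lambda>\<sigma>. Dt ?I F (\<sigma>, v)) has_integral (F (\<tau>, v) - F (0, v))) {0..\<tau>}"
        apply (rule fundamental_theorem_of_calculus)
        using \<tau> apply simp
        apply (rule has_vector_derivative_within_subset[OF dt sub])
        using sub by auto
      then show ?thesis by (simp add: integral_unique)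
    qed
    have d1: "((\<lambda>v. F (\<tau>, v) - F (0, v)) has_vector_derivative (Du F (\<tau>, u) - Du F (0, u))) (at u)"
      using du[of \<tau> u] du[of 0 u] \<tau> tb by (auto intro!: derivative_eq_intros)
    have cfx: "continuous_on (UNIV \<times> cbox 0 \<tau>) (\<lambda>(v, \<sigma>). Du (Dt ?I F) (\<sigma>, v))"
    proof -
      have c1: "continuous_on (UNIV \<times> cbox 0 \<tau>) (\<lambda>x::real\<times>real. (snd x, fst x))"
        by (intro continuous_intros)
      have c2: "(\<lambda>x::real\<times>real. (snd x, fst x)) ` (UNIV \<times> cbox 0 \<tau>) \<subseteq> ?I \<times> UNIV"
        using sub by (auto simp: cbox_interval)
      have "continuous_on (UNIV \<times> cbox 0 \<tau>) (Du (Dt ?I F) \<circ> (\<lambda>x::real\<times>real. (snd x, fst x)))"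
        by (rule continuous_on_compose[OF c1 continuous_on_subset[OF c_dudt c2]])
      then show ?thesis by (simp add: o_def split_beta)
    qed
    have d2: "((\<lambda>v. integral (cbox 0 \<tau>) (\<lambda>\<sigma>. Dt ?I F (\<sigma>, v))) has_vector_derivative
               integral (cbox 0 \<tau>) (\<lambda>\<sigma>. Du (Dt ?I F) (\<sigma>, u))) (at u within UNIV)"
    proof (rule leibniz_rule_vector_derivative[where f="\<lambda>v \<sigma>. Dt ?I F (\<sigma>, v)" and fx="\<lambda>v \<sigma>. Du (Dt ?I F) (\<sigma>, v)"])
      fix x \<sigma> assume "\<sigma> \<in> cbox 0 \<tau>"
      then have "\<sigma> \<in> ?I" using sub by auto
      then show "((\<lambda>x. Dt ?I F (\<sigma>, x)) has_vector_derivative Du (Dt ?I F) (\<sigma>, x)) (at x within UNIV)"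
        using dudt by simp
    next
      fix x :: real
      show "(\<lambda>\<sigma>. Dt ?I F (\<sigma>, x)) integrable_on cbox 0 \<tau>"
        apply (rule integrable_continuous)
        using Ck_cont_time[OF C2, of "[True]" "cbox 0 \<tau>" x] sub by simp
    qed (use cfx in auto)
    from vector_derivative_unique_at[OF d1] d2 eq show ?thesis
      by (simp add: cbox_interval)
  qed
  define b where "b = (t + tb) / 2"
  have b: "0 < b" "b < tb" "t \<le> b" "0 \<le> t" using t tb by (auto simp: b_def)
  have subb: "{0..b} \<subseteq> ?I" using b by auto
  have cg: "continuous_on {0..b} (\<lambda>\<sigma>. Du (Dt ?I F) (\<sigma>, u))"
    using Ck_cont_time[OF C2, of "[False,True]" "{0..b}" u] subb by simp
  have tI: "t \<in> {0..b}" using b by auto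
  have D1: "((\<lambda>\<tau>. Du F (0, u) + integral {0..\<tau>} (\<lambda>\<sigma>. Du (Dt ?I F) (\<sigma>, u))) has_vector_derivative
        Du (Dt ?I F) (t, u)) (at t within {0..b})"
    using integral_has_vector_derivative[OF cg tI] by (auto intro!: derivative_eq_intros)
  have D2: "((\<lambda>\<tau>. Du F (\<tau>, u)) has_vector_derivative Du (Dt ?I F) (t, u)) (at t within {0..b})"
    apply (rule has_vector_derivative_transform[OF tI _ D1])
  proof -
    fix x assume "x \<in> {0..b}"
    then have "x \<in> ?I" using subb by auto
    from key[OF this] show "Du F (x, u) = Du F (0, u) + integral {0..x} (\<lambda>\<sigma>. Du (Dt ?I F) (\<sigma>, u))"
      by (metis add.commute eq_diff_eq)
  qed
  have D3: "((\<lambda>\<tau>. Du F (\<tau>, u)) has_vector_derivative Dt ?I (Du F) (t, u)) (at t within {0..b})"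
    by (rule has_vector_derivative_within_subset[OF dtdu[OF t] subb])
  show ?thesis
    using vector_derivative_unique_within_closed_interval[of 0 b t, unfolded cbox_interval, OF b(1) tI D2 D3]
    by simp
qed

lemma norm_vderiv:
  fixes f :: "real \<Rightarrow> 'a::real_inner"
  assumes f: "(f has_vector_derivative f') (at t within S)" and nz: "f t \<noteq> 0"
  shows "((\<lambda>t. norm (f t)) has_real_derivative ((f t \<bullet> f') / norm (f t))) (at t within S)"
proof -
  have n: "(norm has_derivative (\<lambda>h. h \<bullet> sgn (f t))) (at (f t))"
    using has_derivative_norm[OF nz] by simp
  have "((\<lambda>t. norm (f t)) has_derivative (\<lambda>h. (h *\<^sub>R f') \<bullet> sgn (f t))) (at t within S)"
    using diff_chain_within[OF f[unfolded has_vector_derivative_def] has_derivative_at_withinI[OF n]]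
    by (simp add: o_def)
  then show ?thesis
    unfolding has_field_derivative_def
    by (rule has_derivative_eq_rhs) (auto simp: sgn_div_norm inner_commute fun_eq_iff divide_inverse)
qed

lemma unit_vderiv:
  fixes f :: "real \<Rightarrow> 'a::real_inner"
  assumes f: "(f has_vector_derivative f') (at t within S)" and nz: "f t \<noteq> 0"
  shows "((\<lambda>t. (1 / norm (f t)) *\<^sub>R f t) has_vector_derivative
     ((1 / norm (f t)) *\<^sub>R f' - ((f t \<bullet> f') / norm (f t) ^ 3) *\<^sub>R f t)) (at t within S)"
proof -
  have nn: "norm (f t) \<noteq> 0" using nz by simp
  have "((\<lambda>t. 1 / norm (f t)) has_real_derivative (- ((f t \<bullet> f') / norm (f t)) / (norm (f t))^2)) (at t within S)"
    using DERIV_divide[OF DERIV_const norm_vderiv[OF f nz] nn, of 1] by (simp add: power2_eq_square)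
  from has_vector_derivative_scaleR[OF this f] show ?thesis
    by (rule has_vector_derivative_eq_rhs) (simp add: field_simps power2_eq_square power3_eq_cube nn)
qed


lemma inner_vderiv:
  fixes f g :: "real \<Rightarrow> 'a::real_inner"
  assumes "(f has_vector_derivative f') (at x within S)" "(g has_vector_derivative g') (at x within S)"
  shows "((\<lambda>x. f x \<bullet> g x) has_real_derivative (f' \<bullet> g x + f x \<bullet> g')) (at x within S)"
  using has_derivative_inner[OF assms[unfolded has_vector_derivative_def]]
  unfolding has_field_derivative_def
  by (rule has_derivative_eq_rhs) (auto simp: fun_eq_iff algebra_simps)

lemma unique_Ico:
  assumes t: "t \<in> {0..<tb::real}"
    and "(f has_vector_derivative a) (at t within {0..<tb})"
    and "(f has_vector_derivative b) (at t within {0..<tb})"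
  shows "a = b"
proof -
  define c where "c = (t + tb) / 2"
  have c: "0 < c" "t \<in> {0..c}" "{0..c} \<subseteq> {0..<tb}" using t by (auto simp: c_def)
  show ?thesis
    using vector_derivative_unique_within_closed_interval[of 0 c t, unfolded cbox_interval, OF c(1,2)
      has_vector_derivative_within_subset[OF assms(2) c(3)] has_vector_derivative_within_subset[OF assms(3) c(3)]] .
qed

lemma unique_Ico_real:
  assumes t: "t \<in> {0..<tb::real}"
    and "(f has_real_derivative a) (at t within {0..<tb})"
    and "(f has_real_derivative b) (at t within {0..<tb})"
  shows "a = b"
  using unique_Ico[OF t] assms(2,3) by (simp add: has_real_derivative_iff_has_vector_derivative)

lemma perN:
  fixes s :: "real \<Rightarrow> real"
  assumes per: "\<And>v. s (v + 2*pi) = s v"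
  shows "s (x + 2*pi * real n) = s x"
proof (induction n)
  case 0 then show ?case by simp
next
  case (Suc n)
  have "s (x + 2*pi * real (Suc n)) = s ((x + 2*pi * real n) + 2*pi)"
    by (simp add: algebra_simps)
  also have "\<dots> = s (x + 2*pi * real n)" by (rule per)
  finally show ?case using Suc by simp
qed


lemma red1:
  fixes u :: real
  defines "k \<equiv> \<lfloor>u / (2*pi)\<rfloor>"
  shows "u - 2*pi * of_int k \<in> {0..2*pi}"
proof -
  have k1: "of_int k \<le> u / (2*pi)" "u / (2*pi) < of_int k + 1" unfolding k_def by linarith+
  have a: "2*pi * of_int k \<le> u" using k1(1) pi_gt_zero by (simp add: field_simps)
  have b: "u < 2*pi * (of_int k + 1)" using k1(2) pi_gt_zero by (simp add: field_simps)
  show ?thesis using a b by (simp add: algebra_simps)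
qed

lemma red:
  fixes s :: "real \<Rightarrow> real \<Rightarrow> real"
  assumes per: "\<And>t v. t \<in> I \<Longrightarrow> s t (v + 2*pi) = s t v"
  shows "\<exists>u0 \<in> {0..2*pi}. \<forall>t\<in>I. s t u = s t u0"
proof -
  define k where "k = \<lfloor>u / (2*pi)\<rfloor>"
  define u0 where "u0 = u - 2*pi * of_int k"
  have u0: "u0 \<in> {0..2*pi}" unfolding u0_def k_def by (rule red1)
  have "s t u = s t u0" if t: "t \<in> I" for t
  proof (cases "k \<ge> 0")
    case True
    then obtain n where n: "k = int n" using nonneg_int_cases by blast
    have "u = u0 + 2*pi * real n" by (simp add: u0_def n)
    then show ?thesis using perN[of "s t", OF per[OF t], of u0 n] by simp
  next
    case False
    then obtain n where n: "k = - int n" using nonpos_int_cases by (metis linorder_linear)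
    have "u0 = u + 2*pi * real n" by (simp add: u0_def n)
    then show ?thesis using perN[of "s t", OF per[OF t], of u n] by simp
  qed
  then show ?thesis using u0 by blast
qed

theorem mainTheorem2:
  fixes \<gamma> :: "real \<Rightarrow> real \<Rightarrow> real^3"
    and \<theta> \<upsilon>\<theta> :: "real \<Rightarrow> real \<Rightarrow> real"
    and \<upsilon>T0 :: "real \<Rightarrow> real"
    and tb :: real
  assumes tb_pos: "tb > 0"
    and \<gamma>_smooth: "smooth_on_st {0..<tb} (\<lambda>p. \<gamma> (fst p) (snd p))"
    and \<gamma>_periodic: "\<forall>t\<in>{0..<tb}. \<forall>u. \<gamma> t (u + 2*pi) = \<gamma> t u"
    and regular: "\<forall>t\<in>{0..<tb}. \<forall>u. speed \<gamma> t u > 0"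
    and \<theta>_smooth: "smooth_on_st {0..<tb} (\<lambda>p. \<theta> (fst p) (snd p))"
    and \<theta>_periodic: "\<forall>t\<in>{0..<tb}. \<forall>u. cos (\<theta> t (u + 2*pi)) = cos (\<theta> t u) \<and> sin (\<theta> t (u + 2*pi)) = sin (\<theta> t u)"
    and \<upsilon>\<theta>_C1: "Ck_on {0..<tb} 1 (\<lambda>p. \<upsilon>\<theta> (fst p) (snd p))"
    and \<upsilon>T0_C1: "C1_time {0..<tb} \<upsilon>T0"
    and flow_\<gamma>: "\<forall>t\<in>{0..<tb}. \<forall>u\<in>{0..2*pi}.
          ((\<lambda>\<tau>. \<gamma> \<tau> u) has_vector_derivative
             (kappa_nu \<gamma> \<theta> t u + tangential_velocity \<gamma> \<theta> \<upsilon>T0 t u *\<^sub>R tangent \<gamma> t u))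
          (at t within {0..<tb})"
    and flow_\<theta>: "\<forall>t\<in>{0..<tb}. \<forall>u.
          ((\<lambda>\<tau>. \<theta> \<tau> u) has_real_derivative \<upsilon>\<theta> t u) (at t within {0..<tb})"
  shows "\<forall>u. \<forall>t\<in>{0..<tb}. speed \<gamma> t u / curve_length \<gamma> t = speed \<gamma> 0 u / curve_length \<gamma> 0"
proof -
  let ?I = "{0..<tb}"
  define \<Gamma> where "\<Gamma> = (\<lambda>p::real\<times>real. \<gamma> (fst p) (snd p))"
  define \<Theta> where "\<Theta> = (\<lambda>p::real\<times>real. \<theta> (fst p) (snd p))"
  have C2: "Ck_on ?I 2 \<Gamma>" using \<gamma>_smooth unfolding smooth_on_st_def \<Gamma>_def by blast
  have C\<Theta>: "Ck_on ?I 0 \<Theta>" using \<theta>_smooth unfolding smooth_on_st_def \<Theta>_def by blast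
  define L where "L t = curve_length \<gamma> t" for t
  define K where "K t v = curvature \<gamma> t v * psi1 \<gamma> \<theta> t v * speed \<gamma> t v" for t v
  define IK where "IK t = integral {0..2*pi} (K t)" for t
  have gd: "(\<gamma> t has_vector_derivative Du \<Gamma> (t,v)) (at v)" if "t \<in> ?I" for t v
    using Ck_deriv_u[OF C2, of "[]" t v] that by (simp add: \<Gamma>_def)
  have spd: "speed \<gamma> t v = norm (Du \<Gamma> (t,v))" if "t \<in> ?I" for t v
    by (simp add: speed_def vector_derivative_at[OF gd[OF that]])
  have nz: "Du \<Gamma> (t,v) \<noteq> 0" if "t \<in> ?I" for t v
  proof -
    have "0 < speed \<gamma> t v" using regular that by blast
    then show ?thesis using spd[OF that, of v] by auto
  qed
  have gdd: "((\<lambda>v. Du \<Gamma> (t,v)) has_vector_derivative Du (Du \<Gamma>) (t,v)) (at v)" if "t \<in> ?I" for t v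
    using Ck_deriv_u[OF C2, of "[False]" t v] that by simp
  define T' where "T' t v = (1 / norm (Du \<Gamma> (t,v))) *\<^sub>R Du (Du \<Gamma>) (t,v)
      - ((Du \<Gamma> (t,v) \<bullet> Du (Du \<Gamma>) (t,v)) / norm (Du \<Gamma> (t,v)) ^ 3) *\<^sub>R Du \<Gamma> (t,v)" for t v
  have tang: "tangent \<gamma> t = (\<lambda>v. (1 / norm (Du \<Gamma> (t,v))) *\<^sub>R Du \<Gamma> (t,v))" if "t \<in> ?I" for t
    using that by (auto simp: tangent_def dS_def spd fun_eq_iff vector_derivative_at[OF gd])
  have Td: "(tangent \<gamma> t has_vector_derivative T' t v) (at v)" if "t \<in> ?I" for t v
    unfolding tang[OF that] T'_def by (rule unit_vderiv[OF gdd[OF that] nz[OF that]])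
  have cv: "curv_vec \<gamma> t v = (1 / speed \<gamma> t v) *\<^sub>R T' t v" if "t \<in> ?I" for t v
    by (simp add: curv_vec_def dS_def vector_derivative_at[OF Td[OF that]])
  have Tn: "tangent \<gamma> t v \<bullet> tangent \<gamma> t v = 1" if "t \<in> ?I" for t v
    using nz[OF that, of v] by (simp add: tang[OF that] power2_norm_eq_inner[symmetric] power2_eq_square)
  have TT': "tangent \<gamma> t v \<bullet> T' t v = 0" if "t \<in> ?I" for t v
  proof -
    have "((\<lambda>v. tangent \<gamma> t v \<bullet> tangent \<gamma> t v) has_real_derivative
        (T' t v \<bullet> tangent \<gamma> t v + tangent \<gamma> t v \<bullet> T' t v)) (at v)"
      by (rule inner_vderiv[OF Td[OF that] Td[OF that]])
    moreover have "((\<lambda>v. tangent \<gamma> t v \<bullet> tangent \<gamma> t v) has_real_derivative 0) (at v)"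
      using Tn[OF that] by simp
    ultimately show ?thesis using DERIV_unique by (force simp: inner_commute)
  qed
  have T'c: "T' t v = speed \<gamma> t v *\<^sub>R curv_vec \<gamma> t v" if "t \<in> ?I" for t v
  proof -
    have "0 < speed \<gamma> t v" using regular that by blast
    then show ?thesis using cv[OF that, of v] by simp
  qed
  have Tc: "tangent \<gamma> t v \<bullet> curv_vec \<gamma> t v = 0" if "t \<in> ?I" for t v
    using TT'[OF that, of v] cv[OF that, of v] by simp
  have cT': "continuous_on S (T' t)" if "t \<in> ?I" for t S
  proof -
    have c1: "continuous_on S (\<lambda>v. Du \<Gamma> (t,v))" using Ck_cont_line[OF C2, of "[False]" t] that by simp
    have c2: "continuous_on S (\<lambda>v. Du (Du \<Gamma>) (t,v))" using Ck_cont_line[OF C2, of "[False,False]" t] that by simp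
    show ?thesis unfolding T'_def
      by (intro continuous_intros c1 c2) (use nz[OF that] in auto)
  qed
  have cspd: "continuous_on S (speed \<gamma> t)" if "t \<in> ?I" for t S
  proof -
    have c1: "continuous_on S (\<lambda>v. Du \<Gamma> (t,v))" using Ck_cont_line[OF C2, of "[False]" t] that by simp
    show ?thesis unfolding spd[OF that, abs_def] by (intro continuous_intros c1)
  qed
  have c\<theta>: "continuous_on S (\<theta> t)" if "t \<in> ?I" for t S
    using Ck_cont_line[OF C\<Theta>, of "[]" t] that by (simp add: \<Theta>_def)
  have ccurv: "continuous_on S (curvature \<gamma> t)" if "t \<in> ?I" for t S
  proof -
    have "curvature \<gamma> t = (\<lambda>v. norm ((1 / speed \<gamma> t v) *\<^sub>R T' t v))"
      by (simp add: curvature_def[abs_def] cv[OF that] fun_eq_iff)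
    moreover have "\<forall>v. speed \<gamma> t v \<noteq> 0" using regular that by (metis less_irrefl)
    ultimately show ?thesis
      by (auto intro!: continuous_intros cspd[OF that] cT'[OF that])
  qed
  have cK: "continuous_on S (K t)" if "t \<in> ?I" for t S
    unfolding K_def[abs_def] psi1_def
    by (intro continuous_intros ccurv[OF that] cspd[OF that] c\<theta>[OF that])
  have \<Gamma>_at: "\<Gamma> (a, b) = \<gamma> a b" for a b by (simp add: \<Gamma>_def)
  have flowV: "Dt ?I \<Gamma> (t,v) = kappa_nu \<gamma> \<theta> t v + tangential_velocity \<gamma> \<theta> \<upsilon>T0 t v *\<^sub>R tangent \<gamma> t v"
    if "t \<in> ?I" "v \<in> {0..2*pi}" for t v
  proof -
    have A: "((\<lambda>\<tau>. \<gamma> \<tau> v) has_vector_derivative Dt ?I \<Gamma> (t,v)) (at t within ?I)"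
      using Ck_deriv_t[OF C2, of "[]" t v] that by (simp add: \<Gamma>_at)
    show ?thesis using unique_Ico[OF that(1) A flow_\<gamma>[rule_format, OF that]] .
  qed
  have core: "((\<lambda>\<tau>. speed \<gamma> \<tau> u) has_real_derivative (- speed \<gamma> t u * (IK t / L t))) (at t within ?I)"
    if t: "t \<in> ?I" and u: "u \<in> {0<..<2*pi}" for t u
  proof -
    define W where "W = Du (Dt ?I \<Gamma>) (t,u)"
    have Vd: "((\<lambda>v. Dt ?I \<Gamma> (t,v)) has_vector_derivative W) (at u)"
      using Ck_deriv_u[OF C2, of "[True]" t u] t by (simp add: W_def)
    have P: "((\<lambda>v. Dt ?I \<Gamma> (t,v) \<bullet> tangent \<gamma> t v) has_real_derivative
        (W \<bullet> tangent \<gamma> t u + Dt ?I \<Gamma> (t,u) \<bullet> T' t u)) (at u)"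
      by (rule inner_vderiv[OF Vd Td[OF t]])
    have eqv: "Dt ?I \<Gamma> (t,v) \<bullet> tangent \<gamma> t v = tangential_velocity \<gamma> \<theta> \<upsilon>T0 t v"
      if "v \<in> {0<..<2*pi}" for v
    proof -
      have "v \<in> {0..2*pi}" using that by auto
      then show ?thesis
        using Tn[OF t, of v] Tc[OF t, of v]
        by (simp add: flowV[OF t] kappa_nu_def inner_add_left dot_cross_self inner_commute[of "curv_vec \<gamma> t v"])
    qed
    have u2: "u \<in> {0..2*pi}" using u by auto
    have sub02: "{0<..<2*pi} \<subseteq> {0..2*pi::real}" by auto
    have toat: "(f has_real_derivative f') (at u)"
      if "(f has_vector_derivative f') (at u within {0..2*pi})" for f f'
    proof -
      have "(f has_vector_derivative f') (at u within {0<..<2*pi})"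
        by (rule has_vector_derivative_within_subset[OF that sub02])
      then have "(f has_vector_derivative f') (at u)"
        using has_vector_derivative_within_open[OF u open_greaterThanLessThan] by blast
      then show ?thesis
        by (simp add: has_real_derivative_iff_has_vector_derivative)
    qed
    have dK: "((\<lambda>v. integral {0..v} (K t)) has_real_derivative K t u) (at u)"
      by (rule toat[OF integral_has_vector_derivative[OF cK[OF t] u2]])
    have dS: "((\<lambda>v. integral {0..v} (speed \<gamma> t)) has_real_derivative speed \<gamma> t u) (at u)"
      by (rule toat[OF integral_has_vector_derivative[OF cspd[OF t] u2]])
    have tv_eq: "tangential_velocity \<gamma> \<theta> \<upsilon>T0 t =
        (\<lambda>v. \<upsilon>T0 t + integral {0..v} (K t) - integral {0..v} (speed \<gamma> t) * (IK t / L t))"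
      by (simp add: fun_eq_iff tangential_velocity_def arclength_def K_def[abs_def] L_def IK_def)
    have D_tv: "((\<lambda>v. tangential_velocity \<gamma> \<theta> \<upsilon>T0 t v) has_real_derivative
        (K t u - speed \<gamma> t u * (IK t / L t))) (at u)"
      unfolding tv_eq using DERIV_diff[OF DERIV_add[OF DERIV_const dK] DERIV_cmult_right[OF dS, of "IK t / L t"]] by simp
    have P2: "((\<lambda>v. tangential_velocity \<gamma> \<theta> \<upsilon>T0 t v) has_real_derivative
        (W \<bullet> tangent \<gamma> t u + Dt ?I \<Gamma> (t,u) \<bullet> T' t u)) (at u)"
      by (rule has_field_derivative_transform_within_open[OF P _ u eqv]) auto
    have eqd: "W \<bullet> tangent \<gamma> t u + Dt ?I \<Gamma> (t,u) \<bullet> T' t u = K t u - speed \<gamma> t u * (IK t / L t)"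
      using DERIV_unique[OF P2 D_tv] .
    have cc: "curv_vec \<gamma> t u \<bullet> curv_vec \<gamma> t u = (curvature \<gamma> t u)^2"
      by (simp add: curvature_def power2_norm_eq_inner)
    have DtT': "Dt ?I \<Gamma> (t,u) \<bullet> T' t u = speed \<gamma> t u * (cos (\<theta> t u) * (curvature \<gamma> t u)^2)"
      using Tc[OF t, of u] cc
      by (simp add: T'c[OF t] flowV[OF t u2] kappa_nu_def inner_add_left dot_cross_self)
    have Kval: "K t u = speed \<gamma> t u * (cos (\<theta> t u) * (curvature \<gamma> t u)^2)"
      by (simp add: K_def psi1_def power2_eq_square)
    have WT: "W \<bullet> tangent \<gamma> t u = - speed \<gamma> t u * (IK t / L t)"
      using eqd DtT' Kval by simp
    have dtdu: "((\<lambda>\<tau>. Du \<Gamma> (\<tau>, u)) has_vector_derivative W) (at t within ?I)"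
      using Ck_deriv_t[OF C2, of "[False]" t u] t schwarz[OF C2 t, of u] by (simp add: W_def)
    have N: "((\<lambda>\<tau>. norm (Du \<Gamma> (\<tau>, u))) has_real_derivative (Du \<Gamma> (t,u) \<bullet> W / norm (Du \<Gamma> (t,u)))) (at t within ?I)"
      by (rule norm_vderiv[OF dtdu nz[OF t]])
    have "Du \<Gamma> (t,u) \<bullet> W / norm (Du \<Gamma> (t,u)) = W \<bullet> tangent \<gamma> t u"
      using nz[OF t, of u] by (simp add: tang[OF t] inner_commute[of W])
    then have N2: "((\<lambda>\<tau>. norm (Du \<Gamma> (\<tau>, u))) has_real_derivative (- speed \<gamma> t u * (IK t / L t))) (at t within ?I)"
      using N WT by simp
    show ?thesis
      by (rule has_field_derivative_transform_within[OF N2 zero_less_one t]) (simp add: spd)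
  qed
  have tb0: "0 \<in> ?I" using tb_pos by simp
  have pi_in: "pi \<in> {0<..<2*pi}" by (simp add: pi_gt_zero)
  have spos: "0 < speed \<gamma> t v" if "t \<in> ?I" for t v using regular that by blast
  have ratio: "speed \<gamma> t u * speed \<gamma> 0 pi = speed \<gamma> 0 u * speed \<gamma> t pi"
    if t: "t \<in> ?I" and u: "u \<in> {0<..<2*pi}" for t u
  proof -
    define q where "q \<tau> = speed \<gamma> \<tau> u / speed \<gamma> \<tau> pi" for \<tau>
    have "(q has_field_derivative 0) (at \<tau> within ?I)" if \<tau>: "\<tau> \<in> ?I" for \<tau>
    proof -
      have nz\<pi>: "speed \<gamma> \<tau> pi \<noteq> 0" using spos[OF \<tau>, of pi] by simp
      have "(q has_field_derivative
          ((- speed \<gamma> \<tau> u * (IK \<tau> / L \<tau>)) * speed \<gamma> \<tau> pi - speed \<gamma> \<tau> u * (- speed \<gamma> \<tau> pi * (IK \<tau> / L \<tau>)))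
           / (speed \<gamma> \<tau> pi * speed \<gamma> \<tau> pi)) (at \<tau> within ?I)"
        unfolding q_def by (rule DERIV_divide[OF core[OF \<tau> u] core[OF \<tau> pi_in] nz\<pi>])
      moreover have "((- speed \<gamma> \<tau> u * (IK \<tau> / L \<tau>)) * speed \<gamma> \<tau> pi - speed \<gamma> \<tau> u * (- speed \<gamma> \<tau> pi * (IK \<tau> / L \<tau>)))
           / (speed \<gamma> \<tau> pi * speed \<gamma> \<tau> pi) = 0"
        by (simp add: algebra_simps)
      ultimately show ?thesis by simp
    qed
    then obtain c where "\<forall>x\<in>?I. q x = c"
      using has_field_derivative_zero_constant[of ?I q] by (auto simp: convex_real_interval)
    then have "q t = q 0" using t tb0 by simp
    then show ?thesis
      using spos[OF t, of pi] spos[OF tb0, of pi] by (simp add: q_def field_simps)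
  qed
  have ratio2: "speed \<gamma> t u * speed \<gamma> 0 pi = speed \<gamma> 0 u * speed \<gamma> t pi"
    if t: "t \<in> ?I" and u: "u \<in> {0..2*pi}" for t u
  proof -
    define f where "f v = speed \<gamma> t v * speed \<gamma> 0 pi - speed \<gamma> 0 v * speed \<gamma> t pi" for v
    have cf: "continuous_on UNIV f"
      unfolding f_def[abs_def] by (intro continuous_intros cspd[OF t] cspd[OF tb0])
    have cl: "closed {x \<in> UNIV. f x = 0}"
      by (rule continuous_closed_preimage_constant[OF cf closed_UNIV])
    have "{0<..<2*pi} \<subseteq> {x \<in> UNIV. f x = 0}" using ratio[OF t] by (auto simp: f_def)
    then have "closure {0<..<2*pi} \<subseteq> {x \<in> UNIV. f x = 0}" by (rule closure_minimal[OF _ cl])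
    then have "{0..2*pi} \<subseteq> {x \<in> UNIV. f x = 0}" by (simp add: pi_gt_zero)
    then show ?thesis using u by (auto simp: f_def)
  qed
  have per: "speed \<gamma> t (v + 2*pi) = speed \<gamma> t v" if t: "t \<in> ?I" for t v
  proof -
    have sh: "((\<lambda>v. v + 2*pi) has_vector_derivative 1) (at v)"
      by (auto intro!: derivative_eq_intros)
    have "((\<gamma> t \<circ> (\<lambda>v. v + 2*pi)) has_vector_derivative (1 *\<^sub>R Du \<Gamma> (t, v + 2*pi))) (at v)"
      using vector_diff_chain_at[OF sh gd[OF t, of "v + 2*pi"]] by simp
    moreover have "\<gamma> t \<circ> (\<lambda>v. v + 2*pi) = \<gamma> t" using \<gamma>_periodic t by (auto simp: fun_eq_iff)
    ultimately have "(\<gamma> t has_vector_derivative Du \<Gamma> (t, v + 2*pi)) (at v)" by simp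
    from vector_derivative_unique_at[OF this gd[OF t, of v]] show ?thesis
      by (simp add: spd[OF t])
  qed
  have red: "\<exists>u0 \<in> {0..2*pi}. \<forall>t\<in>?I. speed \<gamma> t u = speed \<gamma> t u0" for u
    by (rule red[of ?I "speed \<gamma>", OF per])
  show ?thesis
  proof (intro allI ballI)
    fix u t assume t: "t \<in> ?I"
    define r where "r = speed \<gamma> t pi / speed \<gamma> 0 pi"
    have r0: "r \<noteq> 0" using spos[OF t, of pi] spos[OF tb0, of pi] by (simp add: r_def)
    have sr: "speed \<gamma> t v = r * speed \<gamma> 0 v" if "v \<in> {0..2*pi}" for v
      using ratio2[OF t that] spos[OF tb0, of pi] by (simp add: r_def field_simps)
    have Lr: "curve_length \<gamma> t = r * curve_length \<gamma> 0"
    proof -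
      have "curve_length \<gamma> t = integral {0..2*pi} (\<lambda>v. r * speed \<gamma> 0 v)"
        unfolding curve_length_def by (rule integral_cong) (simp add: sr)
      then show ?thesis by (simp add: curve_length_def)
    qed
    obtain u0 where u0: "u0 \<in> {0..2*pi}" and h: "\<forall>t\<in>?I. speed \<gamma> t u = speed \<gamma> t u0"
      using red by blast
    have "speed \<gamma> t u = r * speed \<gamma> 0 u"
      using h t tb0 sr[OF u0] by simp
    then show "speed \<gamma> t u / curve_length \<gamma> t = speed \<gamma> 0 u / curve_length \<gamma> 0"
      using r0 by (simp add: Lr)
  qed
qed

end
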